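(* Let $G$ be a clique tree on $n$ vertices with $b$ blocks, each block having at least $3$ vertices, and let $k=Z(G)$. Then $k=n-b$, and consequently $\lfloor n/2\rfloor+1\le k\le n-1$.
   Context: A block of a connected graph is a maximal connected subgraph without a cut vertex of its own; a clique tree is a connected graph each of whose blocks is a complete graph. $Z(G)$ denotes the zero forcing number: with vertices coloured blue or white, a blue vertex with exactly one white neighbour turns that neighbour blue; $Z(G)$ is the minimum size of an initially blue set from which all vertices eventually become blue. *)

theory Defs
  imports Main
begin

definition graph :: "'a set \<Rightarrow> ('a \<Rightarrow> 'a \<Rightarrow> bool) \<Rightarrow> bool" where
  "graph V E \<longleftrightarrow> finite V \<and> (\<forall>x y. E x y \<longrightarrow> x \<in> V \<and> y \<in> V)
     \<and> (\<forall>x y. E x y \<longrightarrow> E y x) \<and> (\<forall>x. \<not> E x x)"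

definition connected_on :: "('a \<Rightarrow> 'a \<Rightarrow> bool) \<Rightarrow> 'a set \<Rightarrow> bool" where
  "connected_on E S \<longleftrightarrow> S \<noteq> {} \<and>
     (\<forall>x\<in>S. \<forall>y\<in>S. (\<lambda>u v. E u v \<and> u \<in> S \<and> v \<in> S)\<^sup>*\<^sup>* x y)"

definition no_cut_vertex :: "('a \<Rightarrow> 'a \<Rightarrow> bool) \<Rightarrow> 'a set \<Rightarrow> bool" where
  "no_cut_vertex E S \<longleftrightarrow> (\<forall>v\<in>S. S - {v} \<noteq> {} \<longrightarrow> connected_on E (S - {v}))"

text \<open>A block: maximal connected subgraph without cut vertex (given by its vertex set;
  maximal such subgraphs are induced).\<close>

definition is_block :: "'a set \<Rightarrow> ('a \<Rightarrow> 'a \<Rightarrow> bool) \<Rightarrow> 'a set \<Rightarrow> bool" where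
  "is_block V E S \<longleftrightarrow> S \<subseteq> V \<and> connected_on E S \<and> no_cut_vertex E S \<and>
     (\<forall>T. S \<subset> T \<and> T \<subseteq> V \<longrightarrow> \<not> (connected_on E T \<and> no_cut_vertex E T))"

definition blocks :: "'a set \<Rightarrow> ('a \<Rightarrow> 'a \<Rightarrow> bool) \<Rightarrow> 'a set set" where
  "blocks V E = {S. is_block V E S}"

definition clique_tree :: "'a set \<Rightarrow> ('a \<Rightarrow> 'a \<Rightarrow> bool) \<Rightarrow> bool" where
  "clique_tree V E \<longleftrightarrow> graph V E \<and> connected_on E V \<and>
     (\<forall>S\<in>blocks V E. \<forall>x\<in>S. \<forall>y\<in>S. x \<noteq> y \<longrightarrow> E x y)"

text \<open>Zero forcing: from blue set C, a blue vertex u with exactly one white neighbour w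
  forces w. forces_to V E B C: C is reachable from B by a sequence of single forces.\<close>

inductive forces_to :: "'a set \<Rightarrow> ('a \<Rightarrow> 'a \<Rightarrow> bool) \<Rightarrow> 'a set \<Rightarrow> 'a set \<Rightarrow> bool"
  for V E B where
  init: "forces_to V E B B"
| step: "forces_to V E B C \<Longrightarrow> u \<in> C \<Longrightarrow> {x \<in> V. E u x \<and> x \<notin> C} = {w}
           \<Longrightarrow> forces_to V E B (insert w C)"

definition zero_forcing_set :: "'a set \<Rightarrow> ('a \<Rightarrow> 'a \<Rightarrow> bool) \<Rightarrow> 'a set \<Rightarrow> bool" where
  "zero_forcing_set V E B \<longleftrightarrow> B \<subseteq> V \<and> forces_to V E B V"

definition zero_forcing_number :: "'a set \<Rightarrow> ('a \<Rightarrow> 'a \<Rightarrow> bool) \<Rightarrow> nat" where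
  "zero_forcing_number V E = (LEAST k. \<exists>B. zero_forcing_set V E B \<and> card B = k)"

end

theory Submission
  imports Defs
begin


lemma rt_mono_set:
  assumes "(\<lambda>u v. E u v \<and> u \<in> S \<and> v \<in> S)\<^sup>*\<^sup>* x y" "S \<subseteq> T"
  shows "(\<lambda>u v. E u v \<and> u \<in> T \<and> v \<in> T)\<^sup>*\<^sup>* x y"
  using assms(1)
proof (induction rule: rtranclp_induct)
  case base then show ?case by simp
next
  case (step y z) 
  have "(\<lambda>u v. E u v \<and> u \<in> T \<and> v \<in> T) y z" using step assms(2) by auto
  then show ?case using step.IH by (rule rtranclp.rtrancl_into_rtrancl[rotated])
qed

lemma rt_sym:
  assumes sym: "\<forall>x y. E x y \<longrightarrow> E y x" and "(\<lambda>u v. E u v \<and> u \<in> S \<and> v \<in> S)\<^sup>*\<^sup>* x y"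
  shows "(\<lambda>u v. E u v \<and> u \<in> S \<and> v \<in> S)\<^sup>*\<^sup>* y x"
  using assms(2)
proof (induction rule: rtranclp_induct)
  case base then show ?case by simp
next
  case (step y z)
  have "(\<lambda>u v. E u v \<and> u \<in> S \<and> v \<in> S) z y" using step sym by auto
  then show ?case using step.IH by (rule converse_rtranclp_into_rtranclp)
qed

lemma conn_union:
  assumes "connected_on E S" "connected_on E T" "S \<inter> T \<noteq> {}"
  shows "connected_on E (S \<union> T)"
proof -
  obtain m where m: "m \<in> S" "m \<in> T" using assms(3) by blast
  let ?R = "\<lambda>u v. E u v \<and> u \<in> S \<union> T \<and> v \<in> S \<union> T"
  have a: "?R\<^sup>*\<^sup>* x m \<and> ?R\<^sup>*\<^sup>* m x" if "x \<in> S \<union> T" for x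
  proof (cases "x \<in> S")
    case True
    then show ?thesis using assms(1) m rt_mono_set[of E S x m "S \<union> T"] rt_mono_set[of E S m x "S \<union> T"]
      unfolding connected_on_def by blast
  next
    case False
    then have "x \<in> T" using that by blast
    then show ?thesis using assms(2) m rt_mono_set[of E T x m "S \<union> T"] rt_mono_set[of E T m x "S \<union> T"]
      unfolding connected_on_def by blast
  qed
  show ?thesis unfolding connected_on_def
  proof (intro conjI ballI)
    show "S \<union> T \<noteq> {}" using m by blast
    fix x y assume "x \<in> S \<union> T" "y \<in> S \<union> T"
    then show "?R\<^sup>*\<^sup>* x y" using a[of x] a[of y] by (meson rtranclp_trans)
  qed
qed

lemma conn_from:
  assumes sym: "\<forall>x y. E x y \<longrightarrow> E y x" and "a \<in> S"
    and "\<forall>x\<in>S. (\<lambda>u v. E u v \<and> u \<in> S \<and> v \<in> S)\<^sup>*\<^sup>* a x"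
  shows "connected_on E S"
  unfolding connected_on_def
proof (intro conjI ballI)
  show "S \<noteq> {}" using assms(2) by blast
  fix x y assume "x \<in> S" "y \<in> S"
  then have "(\<lambda>u v. E u v \<and> u \<in> S \<and> v \<in> S)\<^sup>*\<^sup>* x a" "(\<lambda>u v. E u v \<and> u \<in> S \<and> v \<in> S)\<^sup>*\<^sup>* a y"
    using assms(3) rt_sym[OF sym] by blast+
  then show "(\<lambda>u v. E u v \<and> u \<in> S \<and> v \<in> S)\<^sup>*\<^sup>* x y" by (rule rtranclp_trans)
qed

lemma chain_reach:
  assumes "successively E xs" "xs \<noteq> []"
  shows "\<forall>x\<in>set xs. (\<lambda>u v. E u v \<and> u \<in> set xs \<and> v \<in> set xs)\<^sup>*\<^sup>* (hd xs) x"
  using assms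
proof (induction xs)
  case Nil then show ?case by simp
next
  case (Cons a ys)
  show ?case
  proof (cases ys)
    case Nil then show ?thesis by simp
  next
    case (Cons b zs)
    have e: "E a b" and s: "successively E ys" using Cons.prems Cons by auto
    have IH: "\<forall>x\<in>set ys. (\<lambda>u v. E u v \<and> u \<in> set (a # ys) \<and> v \<in> set (a # ys))\<^sup>*\<^sup>* b x"
      using Cons.IH[OF s] Cons rt_mono_set[of E "set ys" b _ "set (a#ys)"] by auto
    have st: "(\<lambda>u v. E u v \<and> u \<in> set (a # ys) \<and> v \<in> set (a # ys)) a b" using e Cons by auto
    show ?thesis using IH st by (auto intro: converse_rtranclp_into_rtranclp)
  qed
qed

lemma chain_conn:
  assumes sym: "\<forall>x y. E x y \<longrightarrow> E y x" and "successively E xs" "xs \<noteq> []"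
  shows "connected_on E (set xs)"
  using conn_from[OF sym, of "hd xs" "set xs"] chain_reach[OF assms(2,3)] assms(3) by simp

lemma union_2conn:
  assumes "connected_on E S" "no_cut_vertex E S" "connected_on E T" "no_cut_vertex E T"
    and "x \<noteq> y" "x \<in> S" "y \<in> S" "x \<in> T" "y \<in> T"
  shows "connected_on E (S \<union> T) \<and> no_cut_vertex E (S \<union> T)"
proof
  show "connected_on E (S \<union> T)" using conn_union assms by blast
  show "no_cut_vertex E (S \<union> T)" unfolding no_cut_vertex_def
  proof (intro ballI impI)
    fix v assume v: "v \<in> S \<union> T" "S \<union> T - {v} \<noteq> {}"
    have cs: "connected_on E (S - {v})"
    proof (cases "v \<in> S")
      case True
      have "S - {v} \<noteq> {}" using assms(5,6,7) by blast
      then show ?thesis using assms(2) True unfolding no_cut_vertex_def by auto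
    next
      case False then show ?thesis using assms(1) by simp
    qed
    have ct: "connected_on E (T - {v})"
    proof (cases "v \<in> T")
      case True
      have "T - {v} \<noteq> {}" using assms(5,8,9) by blast
      then show ?thesis using assms(4) True unfolding no_cut_vertex_def by auto
    next
      case False then show ?thesis using assms(3) by simp
    qed
    have "(S - {v}) \<inter> (T - {v}) \<noteq> {}" using assms(5-9) by blast
    then have "connected_on E ((S - {v}) \<union> (T - {v}))" using conn_union cs ct by blast
    moreover have "(S - {v}) \<union> (T - {v}) = S \<union> T - {v}" by blast
    ultimately show "connected_on E (S \<union> T - {v})" by simp
  qed
qed

lemma cycle_2conn:
  assumes sym: "\<forall>x y. E x y \<longrightarrow> E y x" and d: "distinct cs" and s: "successively E cs"
    and ne: "cs \<noteq> []" and cl: "E (last cs) (hd cs)"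
  shows "connected_on E (set cs) \<and> no_cut_vertex E (set cs)"
proof
  show "connected_on E (set cs)" using chain_conn[OF sym s ne] .
  show "no_cut_vertex E (set cs)" unfolding no_cut_vertex_def
  proof (intro ballI impI)
    fix v assume v: "v \<in> set cs" "set cs - {v} \<noteq> {}"
    obtain j where j: "j < length cs" "cs ! j = v" using v(1) by (meson in_set_conv_nth)
    define xs where "xs = take j cs" define ys where "ys = drop (Suc j) cs"
    have split: "cs = xs @ v # ys" unfolding xs_def ys_def using id_take_nth_drop[OF j(1)] j(2) by simp
    have sx: "successively E xs" and sy: "successively E ys"
      using s unfolding split by (auto simp: successively_append_iff successively_Cons)
    have link: "ys = [] \<or> xs = [] \<or> E (last ys) (hd xs)"
    proof (cases "ys = [] \<or> xs = []")
      case False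
      then have "last cs = last ys" "hd cs = hd xs" using split by auto
      then show ?thesis using cl by simp
    qed auto
    have sl: "successively E (ys @ xs)" using sx sy link by (auto simp: successively_append_iff)
    have d': "distinct (xs @ v # ys)" using d split by metis
    have st0: "set (ys @ xs) = set (xs @ v # ys) - {v}" using d' by auto
    have st: "set (ys @ xs) = set cs - {v}" using st0 split by metis
    have "ys @ xs \<noteq> []" using v(2) st by (metis empty_set)
    then show "connected_on E (set cs - {v})" using chain_conn[OF sym sl] st by simp
  qed
qed



lemma graph_sym: "graph V E \<Longrightarrow> \<forall>x y. E x y \<longrightarrow> E y x" by (simp add: graph_def)
lemma graph_V: "graph V E \<Longrightarrow> E x y \<Longrightarrow> x \<in> V \<and> y \<in> V" by (simp add: graph_def)
lemma graph_irr: "graph V E \<Longrightarrow> E x y \<Longrightarrow> x \<noteq> y" by (auto simp add: graph_def)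

lemma edge_2conn:
  assumes "graph V E" "E x y"
  shows "connected_on E {x,y} \<and> no_cut_vertex E {x,y}"
proof -
  have "E y x" using assms graph_sym by blast
  moreover have "x \<noteq> y" using graph_irr[OF assms] .
  ultimately show ?thesis using cycle_2conn[OF graph_sym[OF assms(1)], of "[x,y]"] assms by auto
qed

lemma single_2conn: "connected_on E {v} \<and> no_cut_vertex E {v}"
  by (auto simp: connected_on_def no_cut_vertex_def)

lemma exists_block:
  assumes "finite V" "S \<subseteq> V" "connected_on E S" "no_cut_vertex E S"
  shows "\<exists>K. is_block V E K \<and> S \<subseteq> K"
proof -
  let ?P = "\<lambda>T. S \<subseteq> T \<and> T \<subseteq> V \<and> connected_on E T \<and> no_cut_vertex E T"
  obtain T where T: "?P T" "\<forall>T'. ?P T' \<longrightarrow> card V - card T \<le> card V - card T'"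
    using ex_has_least_nat[of ?P S "\<lambda>T. card V - card T"] assms by blast
  have "is_block V E T" unfolding is_block_def
  proof (intro conjI allI impI notI)
    fix T' assume a: "T \<subset> T' \<and> T' \<subseteq> V" "connected_on E T' \<and> no_cut_vertex E T'"
    then have "?P T'" using T by blast
    then have "card V - card T \<le> card V - card T'" using T(2) by blast
    moreover have "card T < card T'" using a assms(1) by (meson finite_subset psubset_card_mono)
    moreover have "card T' \<le> card V" using a assms(1) by (simp add: card_mono)
    ultimately show False by linarith
  qed (use T in auto)
  then show ?thesis using T by blast
qed

lemma block_absorb:
  assumes "is_block V E K" "T \<subseteq> V" "connected_on E T" "no_cut_vertex E T"
    "x \<noteq> y" "x \<in> K" "y \<in> K" "x \<in> T" "y \<in> T"
  shows "T \<subseteq> K"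
proof (rule ccontr)
  assume n: "\<not> T \<subseteq> K"
  have "connected_on E (K \<union> T) \<and> no_cut_vertex E (K \<union> T)"
    using union_2conn[of E K T x y] assms unfolding is_block_def by blast
  moreover have "K \<subset> K \<union> T" "K \<union> T \<subseteq> V" using n assms unfolding is_block_def by auto
  ultimately show False using assms(1) unfolding is_block_def by blast
qed

lemma block_eq:
  assumes "is_block V E K" "is_block V E K'" "x \<noteq> y" "x \<in> K" "y \<in> K" "x \<in> K'" "y \<in> K'"
  shows "K = K'"
  using block_absorb[OF assms(1), of K' x y] block_absorb[OF assms(2), of K x y] assms
  unfolding is_block_def by blast

lemma edge_in_block:
  assumes "graph V E" "E x y"
  shows "\<exists>K\<in>blocks V E. x \<in> K \<and> y \<in> K"
  using exists_block[of V "{x,y}" E] edge_2conn[OF assms] assms graph_V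
  by (auto simp: graph_def blocks_def)

lemma vertex_in_block:
  assumes "graph V E" "v \<in> V"
  shows "\<exists>K\<in>blocks V E. v \<in> K"
  using exists_block[of V "{v}" E] single_2conn[of E v] assms
  by (auto simp: graph_def blocks_def)

lemma finite_blocks: "finite V \<Longrightarrow> finite (blocks V E)"
  by (rule finite_subset[of _ "Pow V"]) (auto simp: blocks_def is_block_def)

lemma block_sub: "K \<in> blocks V E \<Longrightarrow> K \<subseteq> V"
  by (auto simp: blocks_def is_block_def)

lemma clique: "clique_tree V E \<Longrightarrow> K \<in> blocks V E \<Longrightarrow> x \<in> K \<Longrightarrow> y \<in> K \<Longrightarrow> x \<noteq> y \<Longrightarrow> E x y"
  by (auto simp: clique_tree_def)

lemma lower_aux:
  assumes ct: "clique_tree V E" and "forces_to V E B C" "finite B"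
  shows "finite C \<and> (\<exists>F. F \<subseteq> blocks V E \<and> card C \<le> card B + card F \<and> (\<forall>K\<in>F. K \<subseteq> C))"
  using assms(2)
proof (induction rule: forces_to.induct)
  case init then show ?case using assms(3) by (intro conjI exI[of _ "{}"]) auto
next
  case (step C u w)
  from step.IH obtain F where F: "finite C" "F \<subseteq> blocks V E" "card C \<le> card B + card F" "\<forall>K\<in>F. K \<subseteq> C"
    by blast
  have g: "graph V E" using ct by (simp add: clique_tree_def)
  have w: "w \<in> V" "E u w" "w \<notin> C" using step.hyps(3) by auto
  obtain K where K: "K \<in> blocks V E" "u \<in> K" "w \<in> K" using edge_in_block[OF g w(2)] by blast
  have KC: "K \<subseteq> insert w C"
  proof
    fix z assume z: "z \<in> K"
    show "z \<in> insert w C"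
    proof (cases "z = u \<or> z = w")
      case True then show ?thesis using step.hyps(2) by auto
    next
      case False
      then have "E u z" using clique[OF ct K(1) K(2) z] by auto
      moreover have "z \<in> V" using z K(1) block_sub by blast
      ultimately show ?thesis using step.hyps(3) False by blast
    qed
  qed
  have KF: "K \<notin> F" using F(4) K(3) w(3) by blast
  have fF: "finite F" using F(2) finite_blocks[of V E] g finite_subset by (auto simp: graph_def)
  show ?case
  proof (intro conjI exI[of _ "insert K F"])
    show "finite (insert w C)" using F(1) by simp
    show "insert K F \<subseteq> blocks V E" using F(2) K(1) by simp
    show "card (insert w C) \<le> card B + card (insert K F)" using F(1,3) fF KF w(3) by simp
    show "\<forall>K'\<in>insert K F. K' \<subseteq> insert w C" using F(4) KC by blast
  qed
qed

lemma lower_bound: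
  assumes ct: "clique_tree V E" and "zero_forcing_set V E B"
  shows "card V \<le> card B + card (blocks V E)"
proof -
  have g: "graph V E" using ct by (simp add: clique_tree_def)
  have fV: "finite V" using g by (simp add: graph_def)
  have fB: "finite B" using assms(2) fV finite_subset by (auto simp: zero_forcing_set_def)
  have fo: "forces_to V E B V" using assms(2) by (simp add: zero_forcing_set_def)
  have "\<exists>F. F \<subseteq> blocks V E \<and> card V \<le> card B + card F \<and> (\<forall>K\<in>F. K \<subseteq> V)"
    using lower_aux[OF ct fo fB] by (rule conjunct2)
  then obtain F where "F \<subseteq> blocks V E" "card V \<le> card B + card F" by blast
  moreover have "card F \<le> card (blocks V E)" using calculation(1) finite_blocks[OF fV] card_mono by blast
  ultimately show ?thesis by simp
qed



lemma chain_elem: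
  assumes "successively R xs" "2 \<le> length xs" "z \<in> set xs"
  shows "\<exists>w. R z w \<or> R w z"
  using assms
proof (induction xs)
  case Nil then show ?case by simp
next
  case (Cons a ys)
  then obtain b zs where ys: "ys = b # zs" by (cases ys) auto
  have r: "R a b" and s: "successively R ys" using Cons.prems ys by auto
  show ?case
  proof (cases "z = a")
    case True then show ?thesis using r by blast
  next
    case False
    then have z: "z \<in> set ys" using Cons.prems by simp
    show ?thesis
    proof (cases zs)
      case Nil then show ?thesis using z r ys by auto
    next
      case (Cons c ws) then show ?thesis using Cons.IH[OF s _ z] ys by simp
    qed
  qed
qed

lemma chain_in_V:
  assumes "graph V E" "successively E xs" "2 \<le> length xs"
  shows "set xs \<subseteq> V"
  using chain_elem[OF assms(2,3)] graph_V[OF assms(1)] by blast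

lemma chain_avoid:
  assumes "successively (\<lambda>a b. E a b \<and> a \<noteq> y \<and> b \<noteq> y) xs" "2 \<le> length xs"
  shows "y \<notin> set xs"
  using chain_elem[OF assms] by blast

lemma walk_to_L:
  assumes "W\<^sup>*\<^sup>* a b" "a \<notin> L" "b \<in> L"
  shows "\<exists>ps q. q \<in> L \<and> ps \<noteq> [] \<and> hd ps = a \<and> set ps \<inter> L = {} \<and> distinct ps
           \<and> successively W (ps @ [q])"
proof -
  have "(\<exists>ps. ps \<noteq> [] \<and> hd ps = a \<and> last ps = b \<and> set ps \<inter> L = {} \<and> distinct ps \<and> successively W ps)
     \<or> (\<exists>ps q. q \<in> L \<and> ps \<noteq> [] \<and> hd ps = a \<and> set ps \<inter> L = {} \<and> distinct ps
           \<and> successively W (ps @ [q]))"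
    using assms(1)
  proof (induction rule: rtranclp_induct)
    case base
    then show ?case using assms(2) by (intro disjI1 exI[of _ "[a]"]) auto
  next
    case (step b c)
    from step.IH show ?case
    proof
      assume "\<exists>ps. ps \<noteq> [] \<and> hd ps = a \<and> last ps = b \<and> set ps \<inter> L = {} \<and> distinct ps \<and> successively W ps"
      then obtain ps where ps: "ps \<noteq> []" "hd ps = a" "last ps = b" "set ps \<inter> L = {}" "distinct ps" "successively W ps"
        by blast
      have s1: "successively W (ps @ [c])" using ps step.hyps(2) by (auto simp: successively_append_iff)
      show ?case
      proof (cases "c \<in> L")
        case True
        then show ?thesis using ps s1 by blast
      next
        case False
        show ?thesis
        proof (cases "c \<in> set ps")
          case True
          then obtain xs ys where sp: "ps = xs @ c # ys" by (meson split_list)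
          have "successively W (xs @ [c])" using ps(6) unfolding sp
            by (auto simp: successively_append_iff)
          moreover have "hd (xs @ [c]) = a" using ps(2) sp by (cases xs) auto
          ultimately show ?thesis using ps sp by (intro disjI1 exI[of _ "xs @ [c]"]) auto
        next
          case False
          have "hd (ps @ [c]) = a" using ps by simp
          then show ?thesis using ps s1 False \<open>c \<notin> L\<close> by (intro disjI1 exI[of _ "ps @ [c]"]) auto
        qed
      qed
    next
      assume "\<exists>ps q. q \<in> L \<and> ps \<noteq> [] \<and> hd ps = a \<and> set ps \<inter> L = {} \<and> distinct ps
           \<and> successively W (ps @ [q])"
      then show ?case by blast
    qed
  qed
  then show ?thesis using assms(3) by (metis disjoint_iff last_in_set)
qed

lemma ear:
  assumes ct: "clique_tree V E" and K: "K \<in> blocks V E" "x \<in> K" "q \<in> K" "x \<noteq> q"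
    and ps: "ps \<noteq> []" "set ps \<inter> K = {}" "distinct (x # ps @ [q])" "successively E (x # ps @ [q])"
  shows False
proof -
  have g: "graph V E" using ct by (simp add: clique_tree_def)
  let ?cs = "x # ps @ [q]"
  have "E q x" using clique[OF ct K(1,3,2)] K(4) by simp
  then have c2: "connected_on E (set ?cs) \<and> no_cut_vertex E (set ?cs)"
    using cycle_2conn[OF graph_sym[OF g] ps(3) ps(4)] by simp
  have sV: "set ?cs \<subseteq> V" using chain_in_V[OF g ps(4)] by simp
  have "set ?cs \<subseteq> K" using block_absorb[of V E K "set ?cs" x q] K c2 sV by (auto simp: blocks_def)
  then show False using ps(1,2) by (cases ps) auto
qed

lemma walk_V:
  assumes "graph V E" "(\<lambda>a b. E a b \<and> P a b)\<^sup>*\<^sup>* u v" "u \<in> V"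
  shows "v \<in> V"
  using assms(2) by (induction rule: rtranclp_induct) (use assms graph_V[OF assms(1)] in auto)

lemma walk_avoid:
  assumes "(\<lambda>a b. E a b \<and> a \<noteq> y \<and> b \<noteq> y)\<^sup>*\<^sup>* u v" "u \<noteq> y"
  shows "v \<noteq> y"
  using assms by (induction rule: rtranclp_induct) auto

lemma leaf_exists:
  assumes ct: "clique_tree V E"
  shows "\<exists>L\<in>blocks V E. \<exists>c\<in>L. \<forall>y\<in>L-{c}. \<forall>z. E y z \<longrightarrow> z \<in> L"
proof -
  have g: "graph V E" using ct by (simp add: clique_tree_def)
  have fV: "finite V" using g by (simp add: graph_def)
  define W where "W c = (\<lambda>a b. E a b \<and> a \<noteq> c \<and> b \<noteq> c)" for c
  define R where "R L c = {v. \<exists>u\<in>L-{c}. (W c)\<^sup>*\<^sup>* u v}" for L c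
  have RV: "R L c \<subseteq> V" if "L \<in> blocks V E" for L c
  proof
    fix v assume "v \<in> R L c"
    then obtain u where u: "u \<in> L" "(\<lambda>a b. E a b \<and> a \<noteq> c \<and> b \<noteq> c)\<^sup>*\<^sup>* u v"
      unfolding R_def W_def by blast
    show "v \<in> V" using walk_V[OF g, of "\<lambda>a b. a \<noteq> c \<and> b \<noteq> c", OF u(2)] block_sub[OF that] u(1) by blast
  qed
  obtain v where "v \<in> V" using ct by (auto simp: clique_tree_def connected_on_def)
  then obtain K0 where K0: "K0 \<in> blocks V E" "v \<in> K0" using vertex_in_block[OF g] by blast
  let ?P = "\<lambda>p. fst p \<in> blocks V E \<and> snd p \<in> fst p"
  obtain p where p: "?P p" "\<forall>p'. ?P p' \<longrightarrow> card (R (fst p) (snd p)) \<le> card (R (fst p') (snd p'))"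
    using ex_has_least_nat[of ?P "(K0, v)" "\<lambda>p. card (R (fst p) (snd p))"] K0 by auto
  define L c where "L = fst p" and "c = snd p"
  have L: "L \<in> blocks V E" "c \<in> L" using p L_def c_def by auto
  have min: "\<And>L' y. L' \<in> blocks V E \<Longrightarrow> y \<in> L' \<Longrightarrow> card (R L c) \<le> card (R L' y)"
    using p(2) L_def c_def by (metis fst_conv snd_conv)
  show ?thesis
  proof (rule ccontr)
    assume "\<not> ?thesis"
    then obtain y z where yz: "y \<in> L" "y \<noteq> c" "E y z" "z \<notin> L" using L by blast
    obtain L' where L': "L' \<in> blocks V E" "y \<in> L'" "z \<in> L'" using edge_in_block[OF g yz(3)] by blast
    have c1: "u \<notin> L" if "u \<in> L'" "u \<noteq> y" for u
    proof
      assume "u \<in> L"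
      then have "L = L'" using block_eq[of V E L L' y u] L L' that yz by (auto simp: blocks_def)
      then show False using yz L' by simp
    qed
    have c2: "c \<notin> R L' y"
    proof
      assume "c \<in> R L' y"
      then obtain u where u: "u \<in> L'" "u \<noteq> y" "(W y)\<^sup>*\<^sup>* u c" unfolding R_def by blast
      obtain ps q where pq: "q \<in> L" "ps \<noteq> []" "hd ps = u" "set ps \<inter> L = {}" "distinct ps"
          "successively (W y) (ps @ [q])"
        using walk_to_L[OF u(3) c1[OF u(1,2)] L(2)] by blast
      have len: "2 \<le> length (ps @ [q])" using pq(2) by (cases ps) auto
      have ny: "y \<notin> set (ps @ [q])" using chain_avoid[of E y "ps @ [q]"] pq(6) len unfolding W_def by blast
      have "distinct (y # ps @ [q])" using ny pq by auto
      moreover have "successively E (y # ps @ [q])"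
      proof -
        have "successively E (ps @ [q])" using pq(6) by (rule successively_mono) (auto simp: W_def)
        moreover have "E y u" using clique[OF ct L'(1,2) u(1)] u(2) by simp
        ultimately show ?thesis using pq(2,3) by (cases ps) (auto simp: successively_Cons)
      qed
      ultimately show False using ear[OF ct L(1) yz(1) pq(1) _ pq(2) pq(4)] ny by auto
    qed
    have c3: "R L' y \<subseteq> R L c"
    proof
      fix v assume "v \<in> R L' y"
      then obtain u where u: "u \<in> L'" "u \<noteq> y" "(W y)\<^sup>*\<^sup>* u v" unfolding R_def by blast
      have "(W y)\<^sup>*\<^sup>* u v \<longrightarrow> (W c)\<^sup>*\<^sup>* u v" for v
      proof
        assume "(W y)\<^sup>*\<^sup>* u v"
        then show "(W c)\<^sup>*\<^sup>* u v"
        proof (induction rule: rtranclp_induct)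
          case base then show ?case by simp
        next
          case (step b b')
          have "b \<in> R L' y" "b' \<in> R L' y" using step u unfolding R_def
            by (auto intro: rtranclp.rtrancl_into_rtrancl)
          then have "b \<noteq> c" "b' \<noteq> c" using c2 by auto
          then have "W c b b'" using step.hyps(2) unfolding W_def by simp
          then show ?case using step.IH by (rule rtranclp.rtrancl_into_rtrancl[rotated])
        qed
      qed
      then have wc: "(W c)\<^sup>*\<^sup>* u v" using u by blast
      have "u \<in> R L' y" using u unfolding R_def by blast
      then have "u \<noteq> c" using c2 by auto
      then have "W c y u" using clique[OF ct L'(1,2) u(1)] u(2) yz(2) unfolding W_def by simp
      then have "(W c)\<^sup>*\<^sup>* y v" using wc by (rule converse_rtranclp_into_rtranclp)
      then show "v \<in> R L c" using yz(1,2) unfolding R_def by blast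
    qed
    have "y \<in> R L c" using yz unfolding R_def by blast
    moreover have "y \<notin> R L' y"
    proof
      assume "y \<in> R L' y"
      then obtain u where "u \<in> L'" "u \<noteq> y" "(\<lambda>a b. E a b \<and> a \<noteq> y \<and> b \<noteq> y)\<^sup>*\<^sup>* u y"
        unfolding R_def W_def by blast
      then show False using walk_avoid[of E y u y] by blast
    qed
    ultimately have "R L' y \<subset> R L c" using c3 by blast
    moreover have "finite (R L c)" using RV[OF L(1)] fV finite_subset by blast
    ultimately have "card (R L' y) < card (R L c)" by (simp add: psubset_card_mono)
    then show False using min[OF L'(1,2)] by simp
  qed
qed



lemma rel_res: "S \<subseteq> U \<Longrightarrow>
  (\<lambda>u v. (E u v \<and> u \<in> U \<and> v \<in> U) \<and> u \<in> S \<and> v \<in> S) = (\<lambda>u v. E u v \<and> u \<in> S \<and> v \<in> S)"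
  by (auto simp: fun_eq_iff)

lemma conn_res: "S \<subseteq> U \<Longrightarrow> connected_on (\<lambda>u v. E u v \<and> u \<in> U \<and> v \<in> U) S = connected_on E S"
  unfolding connected_on_def using rel_res[of S U E] by simp

lemma ncv_res: "S \<subseteq> U \<Longrightarrow> no_cut_vertex (\<lambda>u v. E u v \<and> u \<in> U \<and> v \<in> U) S = no_cut_vertex E S"
  unfolding no_cut_vertex_def using conn_res[of "S - {v}" U E for v] by auto

lemma card3_other:
  assumes "3 \<le> card S" shows "\<exists>s\<in>S. s \<noteq> y"
proof (rule ccontr)
  assume "\<not> ?thesis"
  then have "S \<subseteq> {y}" by blast
  then have "card S \<le> 1" using card_mono[of "{y}" S] by simp
  then show False using assms by simp
qed

lemma neighbor_in:
  assumes "connected_on E S" "y \<in> S" "s \<in> S" "y \<noteq> s"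
  shows "\<exists>y'. E y y' \<and> y' \<in> S"
proof -
  have "(\<lambda>u v. E u v \<and> u \<in> S \<and> v \<in> S)\<^sup>*\<^sup>* y s" using assms unfolding connected_on_def by blast
  then show ?thesis using assms(4) by (cases rule: converse_rtranclpE) auto
qed

locale leafsetup =
  fixes V :: "'a set" and E :: "'a \<Rightarrow> 'a \<Rightarrow> bool" and L :: "'a set" and c :: 'a
  assumes ct: "clique_tree V E" and sz: "\<forall>S\<in>blocks V E. 3 \<le> card S"
    and L: "L \<in> blocks V E" "c \<in> L" and leaf: "\<forall>y\<in>L-{c}. \<forall>z. E y z \<longrightarrow> z \<in> L"
    and LV: "L \<noteq> V"
begin

definition "V' = V - (L - {c})"
definition "E' = (\<lambda>u v. E u v \<and> u \<in> V' \<and> v \<in> V')"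

lemma g: "graph V E" using ct by (simp add: clique_tree_def)
lemma LsV: "L \<subseteq> V" using block_sub[OF L(1)] .
lemma V'V: "V' \<subseteq> V" by (auto simp: V'_def)
lemma cV': "c \<in> V'" using L LsV by (auto simp: V'_def)
lemma leaf': "y \<in> L \<Longrightarrow> y \<noteq> c \<Longrightarrow> E y z \<Longrightarrow> z \<in> L" using leaf by blast
lemma leaf'': "u \<in> V' \<Longrightarrow> u \<noteq> c \<Longrightarrow> E u z \<Longrightarrow> z \<in> V'"
  using leaf' graph_sym[OF g] graph_V[OF g] by (auto simp: V'_def)

lemma g': "graph V' E'"
  using g V'V finite_subset unfolding graph_def E'_def by blast

lemma conn': "connected_on E' V'"
proof -
  let ?r = "\<lambda>u v. E' u v \<and> u \<in> V' \<and> v \<in> V'"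
  have key: "(b \<in> V' \<longrightarrow> ?r\<^sup>*\<^sup>* a b) \<and> (b \<notin> V' \<longrightarrow> ?r\<^sup>*\<^sup>* a c)"
    if a: "a \<in> V'" and w: "(\<lambda>u v. E u v \<and> u \<in> V \<and> v \<in> V)\<^sup>*\<^sup>* a b" for a b
    using w
  proof (induction rule: rtranclp_induct)
    case base then show ?case using a by simp
  next
    case (step b b')
    have e: "E b b'" using step.hyps(2) by simp
    show ?case
    proof (cases "b \<in> V'")
      case True
      show ?thesis
      proof (cases "b' \<in> V'")
        case True
        then show ?thesis using step.IH \<open>b \<in> V'\<close> e
          by (auto simp: E'_def intro: rtranclp.rtrancl_into_rtrancl)
      next
        case False
        then have "b' \<in> L" "b' \<noteq> c" using step.hyps(2) by (auto simp: V'_def)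
        then have "b \<in> L" using leaf' graph_sym[OF g] e by blast
        then have "b = c" using \<open>b \<in> V'\<close> by (auto simp: V'_def)
        then show ?thesis using step.IH \<open>b \<in> V'\<close> False by auto
      qed
    next
      case False
      then have "b \<in> L" "b \<noteq> c" using step.hyps(2) by (auto simp: V'_def)
      then have "b' \<in> L" using leaf' e by blast
      then show ?thesis using step.IH False by (auto simp: V'_def)
    qed
  qed
  have cv: "connected_on E V" using ct by (simp add: clique_tree_def)
  show ?thesis unfolding connected_on_def
  proof (intro conjI ballI)
    show "V' \<noteq> {}" using cV' by blast
    fix x y assume "x \<in> V'" "y \<in> V'"
    then show "?r\<^sup>*\<^sup>* x y" using key[of x y] cv V'V unfolding connected_on_def by blast
  qed
qed

lemma blocks': "blocks V' E' = blocks V E - {L}"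
proof
  show "blocks V E - {L} \<subseteq> blocks V' E'"
  proof
    fix S assume S: "S \<in> blocks V E - {L}"
    have Sb: "is_block V E S" using S by (simp add: blocks_def)
    have SV': "S \<subseteq> V'"
    proof
      fix y assume y: "y \<in> S"
      show "y \<in> V'"
      proof (rule ccontr)
        assume "y \<notin> V'"
        then have yL: "y \<in> L" "y \<noteq> c" using y Sb by (auto simp: V'_def is_block_def)
        have "card S \<ge> 3" using sz S by blast
        then obtain s where s: "s \<in> S" "s \<noteq> y"
          using card3_other[of S y] by blast
        have cS: "connected_on E S" using Sb by (simp add: is_block_def)
        obtain y' where y': "E y y'" "y' \<in> S" using neighbor_in[OF cS y s(1) not_sym[OF s(2)]] by blast
        have "y' \<in> L" "y' \<noteq> y" using leaf' yL y'(1) graph_irr[OF g] by auto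
        then have "S = L" using block_eq[of V E S L y y'] Sb L yL y y' by (auto simp: blocks_def)
        then show False using S by simp
      qed
    qed
    have "is_block V' E' S" unfolding is_block_def
    proof (intro conjI allI impI notI)
      show "S \<subseteq> V'" by fact
      show "connected_on E' S" unfolding E'_def using conn_res[OF SV', of E] Sb by (simp add: is_block_def)
      show "no_cut_vertex E' S" unfolding E'_def using ncv_res[OF SV', of E] Sb by (simp add: is_block_def)
      fix T assume T: "S \<subset> T \<and> T \<subseteq> V'" "connected_on E' T \<and> no_cut_vertex E' T"
      then have "connected_on E T \<and> no_cut_vertex E T"
        using conn_res[of T V' E] ncv_res[of T V' E] unfolding E'_def by simp
      moreover have "T \<subseteq> V" using T V'V by blast
      ultimately show False using Sb T unfolding is_block_def by blast
    qed
    then show "S \<in> blocks V' E'" by (simp add: blocks_def)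
  qed
next
  show "blocks V' E' \<subseteq> blocks V E - {L}"
  proof
    fix S assume S: "S \<in> blocks V' E'"
    have Sb': "is_block V' E' S" using S by (simp add: blocks_def)
    have SV': "S \<subseteq> V'" and cS: "connected_on E S" and nS: "no_cut_vertex E S"
    proof -
      have a: "S \<subseteq> V'" "connected_on E' S" "no_cut_vertex E' S" using Sb' unfolding is_block_def by auto
      then show "S \<subseteq> V'" "connected_on E S" "no_cut_vertex E S"
        using conn_res[of S V' E] ncv_res[of S V' E] unfolding E'_def by auto
    qed
    have maxS: "\<not> (connected_on E T \<and> no_cut_vertex E T)" if "S \<subset> T" "T \<subseteq> V'" for T
    proof
      assume "connected_on E T \<and> no_cut_vertex E T"
      then have "connected_on E' T \<and> no_cut_vertex E' T"
        using conn_res[of T V' E] ncv_res[of T V' E] that(2) unfolding E'_def by simp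
      then show False using Sb' that unfolding is_block_def by blast
    qed
    have "is_block V E S"
      unfolding is_block_def
    proof (intro conjI allI impI notI)
      show "S \<subseteq> V" using SV' V'V by blast
      show "connected_on E S" "no_cut_vertex E S" using cS nS by auto
      fix T assume T: "S \<subset> T \<and> T \<subseteq> V" "connected_on E T \<and> no_cut_vertex E T"
      show False
      proof (cases "T \<subseteq> V'")
        case True then show False using maxS T by blast
      next
        case False
        then obtain y where y: "y \<in> T" "y \<notin> V'" by blast
        then have yL: "y \<in> L" "y \<noteq> c" using T by (auto simp: V'_def)
        obtain s where s: "s \<in> S" using cS by (auto simp: connected_on_def)
        have "s \<noteq> y" using s SV' y by blast
        then obtain y' where y': "E y y'" "y' \<in> T" using neighbor_in[of E T y s] T y s by auto
        have "y' \<in> L" "y' \<noteq> y" using leaf' yL y'(1) graph_irr[OF g] by auto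
        then have TL: "T \<subseteq> L" using block_absorb[of V E L T y y'] L T y y' yL by (auto simp: blocks_def)
        then have Sc: "S = {c}" using SV' T s by (auto simp: V'_def)
        obtain x where x: "x \<in> V" "x \<notin> L" using LV LsV by blast
        then have "x \<in> V'" "x \<noteq> c" using L by (auto simp: V'_def)
        then obtain u where u: "E' c u" "u \<in> V'" using neighbor_in[OF conn' cV'] by blast
        have "connected_on E' {c,u} \<and> no_cut_vertex E' {c,u}" using edge_2conn[OF g' u(1)] .
        moreover have "{c} \<subset> {c,u}" using graph_irr[OF g' u(1)] by auto
        moreover have "{c,u} \<subseteq> V'" using cV' u by auto
        ultimately show False using Sb' Sc unfolding is_block_def by blast
      qed
    qed
    moreover have "S \<noteq> L"
    proof
      assume "S = L"
      have "card L \<ge> 3" using sz L by blast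
      then obtain y where "y \<in> L" "y \<noteq> c"
        using card3_other[of L c] by blast
      then show False using \<open>S = L\<close> SV' by (auto simp: V'_def)
    qed
    ultimately show "S \<in> blocks V E - {L}" by (simp add: blocks_def)
  qed
qed

lemma ct': "clique_tree V' E'"
  unfolding clique_tree_def
proof (intro conjI ballI impI)
  show "graph V' E'" by (rule g')
  show "connected_on E' V'" by (rule conn')
  fix S x y assume "S \<in> blocks V' E'" "x \<in> S" "y \<in> S" "x \<noteq> y"
  moreover have "S \<subseteq> V'" using \<open>S \<in> blocks V' E'\<close> block_sub by blast
  ultimately show "E' x y" using blocks' clique[OF ct] unfolding E'_def by blast
qed

end



lemma force_one:
  assumes "forces_to V E B C" "x \<in> C" "E x a" "a \<in> V" "{z\<in>V. E x z \<and> z \<notin> C} \<subseteq> {a}"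
  shows "forces_to V E B (insert a C)"
proof (cases "a \<in> C")
  case True then show ?thesis using assms(1) by (simp add: insert_absorb)
next
  case False
  then have "{z\<in>V. E x z \<and> z \<notin> C} = {a}" using assms by blast
  then show ?thesis using forces_to.step[OF assms(1,2)] by simp
qed

context leafsetup
begin

lemma force_ext:
  assumes a: "a \<in> L" "a \<noteq> c" and L0: "L0 = L - {c, a}" "L0 \<noteq> {}" and B': "B' \<subseteq> V'"
    and f: "forces_to V' E' B' C'"
  shows "C' \<subseteq> V' \<and> forces_to V E (B' \<union> L0) (C' \<union> L0 \<union> (if c \<in> C' then {a} else {}))"
proof -
  have cl: "\<And>x y. x \<in> L \<Longrightarrow> y \<in> L \<Longrightarrow> x \<noteq> y \<Longrightarrow> E x y" using clique[OF ct L(1)] by blast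
  obtain x where x: "x \<in> L0" using L0 by blast
  have xL: "x \<in> L" "x \<noteq> c" "x \<noteq> a" using x L0 by auto
  have aV: "a \<in> V" using a LsV by blast
  have exa: "E x a" using cl[OF xL(1) a(1) xL(3)] .
  show ?thesis
  using f
proof (induction rule: forces_to.induct)
  case init
  show ?case
  proof (cases "c \<in> B'")
    case False then show ?thesis using B' by (simp add: forces_to.init)
  next
    case True
    have "{z\<in>V. E x z \<and> z \<notin> B' \<union> L0} \<subseteq> {a}"
      using leaf'[OF xL(1,2)] L0(1) True by auto
    moreover have "forces_to V E (B' \<union> L0) (B' \<union> L0)" by (rule forces_to.init)
    moreover have "x \<in> B' \<union> L0" using x by blast
    ultimately have "forces_to V E (B' \<union> L0) (insert a (B' \<union> L0))"
      using force_one[of V E "B' \<union> L0" "B' \<union> L0" x a] exa aV by blast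
    then show ?thesis using True B' by simp
  qed
next
  case (step C u w)
  define D where "D = C \<union> L0 \<union> (if c \<in> C then {a} else {})"
  have CV': "C \<subseteq> V'" and IH: "forces_to V E (B' \<union> L0) D" using step.IH D_def by auto
  have w: "w \<in> V'" "E u w" "w \<notin> C" "u \<in> V'" using step.hyps(3) unfolding E'_def by auto
  have L0V': "L0 \<inter> V' = {}" "a \<notin> V'" using L0 a by (auto simp: V'_def)
  have wD: "w \<notin> D" using w L0V' unfolding D_def by auto
  have wV: "w \<in> V" using w V'V by blast
  show ?case
  proof (cases "u = c")
    case False
    have N: "{z\<in>V. E u z \<and> z \<notin> D} = {w}"
    proof
      show "{w} \<subseteq> {z\<in>V. E u z \<and> z \<notin> D}" using w wD wV by auto
      show "{z\<in>V. E u z \<and> z \<notin> D} \<subseteq> {w}"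
      proof
        fix z assume z: "z \<in> {z\<in>V. E u z \<and> z \<notin> D}"
        then have "z \<in> V'" using leaf''[OF w(4) False] by blast
        then have "z \<in> {x \<in> V'. E' u x \<and> x \<notin> C}" using z w(4) unfolding D_def E'_def by auto
        then show "z \<in> {w}" using step.hyps(3) by blast
      qed
    qed
    have uD: "u \<in> D" using step.hyps(2) D_def by auto
    have F1: "forces_to V E (B' \<union> L0) (insert w D)" using forces_to.step[OF IH uD N] .
    show ?thesis
    proof (cases "w = c")
      case False
      then have "insert w C \<union> L0 \<union> (if c \<in> insert w C then {a} else {}) = insert w D"
        unfolding D_def by auto
      then show ?thesis using F1 CV' w by simp
    next
      case True
      have cC: "c \<notin> C" using True w by simp
      have "{z\<in>V. E x z \<and> z \<notin> insert w D} \<subseteq> {a}"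
        using leaf'[OF xL(1,2)] L0(1) True unfolding D_def by auto
      moreover have "x \<in> insert w D" using x unfolding D_def by blast
      ultimately have "forces_to V E (B' \<union> L0) (insert a (insert w D))"
        using force_one[OF F1, of x a] exa aV by blast
      moreover have "insert a (insert w D) = insert w C \<union> L0 \<union> (if c \<in> insert w C then {a} else {})"
        using True cC unfolding D_def by auto
      ultimately show ?thesis using CV' w by simp
    qed
  next
    case True
    have cC: "c \<in> C" using True step.hyps(2) by simp
    have LD: "L \<subseteq> insert c D" using cC L0 unfolding D_def by auto
    have N: "{z\<in>V. E u z \<and> z \<notin> D} = {w}"
    proof
      show "{w} \<subseteq> {z\<in>V. E u z \<and> z \<notin> D}" using w wD wV by auto
      show "{z\<in>V. E u z \<and> z \<notin> D} \<subseteq> {w}"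
      proof
        fix z assume z: "z \<in> {z\<in>V. E u z \<and> z \<notin> D}"
        then have "z \<notin> L" using LD graph_irr[OF g] True by auto
        then have "z \<in> V'" using z by (auto simp: V'_def)
        then have "z \<in> {x \<in> V'. E' u x \<and> x \<notin> C}" using z w(4) unfolding D_def E'_def by auto
        then show "z \<in> {w}" using step.hyps(3) by blast
      qed
    qed
    have uD: "u \<in> D" using step.hyps(2) D_def by auto
    have "forces_to V E (B' \<union> L0) (insert w D)" using forces_to.step[OF IH uD N] .
    moreover have "insert w D = insert w C \<union> L0 \<union> (if c \<in> insert w C then {a} else {})"
      using cC unfolding D_def by auto
    ultimately show ?thesis using CV' w by simp
  qed
qed
qed

end



lemma upper:
  assumes "clique_tree V E" "\<forall>S\<in>blocks V E. 3 \<le> card S"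
  shows "\<exists>B. zero_forcing_set V E B \<and> card B + card (blocks V E) = card V
           \<and> 2 * card (blocks V E) + 1 \<le> card V"
  using assms
proof (induction "card V" arbitrary: V E rule: less_induct)
  case less
  have ct: "clique_tree V E" and sz: "\<forall>S\<in>blocks V E. 3 \<le> card S" using less.prems by auto
  have g: "graph V E" using ct by (simp add: clique_tree_def)
  have fV: "finite V" using g by (simp add: graph_def)
  obtain L c where L: "L \<in> blocks V E" "c \<in> L" and leaf: "\<forall>y\<in>L-{c}. \<forall>z. E y z \<longrightarrow> z \<in> L"
    using leaf_exists[OF ct] by blast
  have LsV: "L \<subseteq> V" using block_sub[OF L(1)] .
  have cL: "3 \<le> card L" using sz L by blast
  show ?case
  proof (cases "L = V")
    case True
    have Vb: "is_block V E V" using L True by (simp add: blocks_def)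
    have bl: "blocks V E = {V}"
    proof
      show "{V} \<subseteq> blocks V E" using Vb by (simp add: blocks_def)
      show "blocks V E \<subseteq> {V}"
      proof
        fix S assume "S \<in> blocks V E"
        then have Sb: "is_block V E S" by (simp add: blocks_def)
        show "S \<in> {V}"
        proof (rule ccontr)
          assume "S \<notin> {V}"
          then have "S \<subset> V" using Sb by (auto simp: is_block_def)
          then show False using Sb Vb unfolding is_block_def by blast
        qed
      qed
    qed
    have c3: "3 \<le> card V" using cL True by simp
    then obtain a where a: "a \<in> V" by fastforce
    obtain x where x: "x \<in> V" "x \<noteq> a" using card3_other[OF c3, where y=a] by blast
    have exa: "E x a" using clique[OF ct L(1)] True x a by blast
    define B where "B = V - {a}"
    have N: "{z \<in> V. E x z \<and> z \<notin> B} = {a}" using exa a unfolding B_def by auto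
    have xB: "x \<in> B" using x unfolding B_def by blast
    have "forces_to V E B (insert a B)" using forces_to.step[OF forces_to.init[of V E B] xB N] .
    moreover have "insert a B = V" using a unfolding B_def by blast
    ultimately have "zero_forcing_set V E B" unfolding zero_forcing_set_def B_def by auto
    moreover have "card B = card V - 1" using a fV unfolding B_def by simp
    ultimately show ?thesis using bl c3 by (intro exI[of _ B]) auto
  next
    case False
    interpret leafsetup V E L c using ct sz L leaf False by unfold_locales
    obtain a where a: "a \<in> L" "a \<noteq> c" using card3_other[OF cL, where y=c] by blast
    define L0 where "L0 = L - {c, a}"
    have fL: "finite L" using finite_subset[OF LsV fV] .
    have cL0: "card L0 = card L - 2" unfolding L0_def using a L(2) fL by (simp add: card_Diff_subset)
    then have L0ne: "L0 \<noteq> {}" using cL by auto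
    have aV: "a \<notin> V'" "a \<in> V" using a LsV by (auto simp: V'_def)
    have "V' \<subset> V" using aV V'V by blast
    then have ltV: "card V' < card V" using fV by (rule psubset_card_mono[rotated])
    have sz': "\<forall>S\<in>blocks V' E'. 3 \<le> card S" using sz blocks' by blast
    obtain B' where B': "zero_forcing_set V' E' B'" "card B' + card (blocks V' E') = card V'"
        "2 * card (blocks V' E') + 1 \<le> card V'"
      using less.hyps[OF ltV ct' sz'] by blast
    have B'V': "B' \<subseteq> V'" and fo': "forces_to V' E' B' V'" using B'(1) by (auto simp: zero_forcing_set_def)
    have fo: "forces_to V E (B' \<union> L0) (V' \<union> L0 \<union> (if c \<in> V' then {a} else {}))"
      using force_ext[OF a L0_def L0ne B'V' fo'] by blast
    have VV: "V' \<union> L0 \<union> (if c \<in> V' then {a} else {}) = V"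
      using cV' a LsV unfolding L0_def V'_def by auto
    have zf: "zero_forcing_set V E (B' \<union> L0)"
      using fo VV B'V' V'V LsV unfolding zero_forcing_set_def L0_def by auto
    have fV': "finite V'" using finite_subset[OF V'V fV] .
    have fB': "finite B'" using finite_subset[OF B'V' fV'] .
    have disj: "B' \<inter> L0 = {}" using B'V' unfolding L0_def V'_def by auto
    have cB: "card (B' \<union> L0) = card B' + card L0"
      using card_Un_disjoint[OF fB' _ disj] fL unfolding L0_def by simp
    have cV: "card V = card V' + (card L - 1)"
    proof -
      have "V = V' \<union> (L - {c})" "V' \<inter> (L - {c}) = {}" using LsV unfolding V'_def by auto
      moreover note fV'
      ultimately have "card V = card V' + card (L - {c})" using fL card_Un_disjoint by (metis finite_Diff)
      then show ?thesis using L(2) fL by simp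
    qed
    have cb: "card (blocks V E) = card (blocks V' E') + 1"
      using blocks' card_Suc_Diff1[OF finite_blocks[OF fV, of E] L(1)] by simp
    show ?thesis
    proof (intro exI[of _ "B' \<union> L0"] conjI)
      show "zero_forcing_set V E (B' \<union> L0)" by (rule zf)
      show "card (B' \<union> L0) + card (blocks V E) = card V" using cB cL0 cV cb B'(2) cL by simp
      show "2 * card (blocks V E) + 1 \<le> card V" using cV cb B'(3) cL by simp
    qed
  qed
qed

theorem mainTheorem3:
  fixes V :: "'a set" and E :: "'a \<Rightarrow> 'a \<Rightarrow> bool" and n b k :: nat
  assumes "clique_tree V E"
    and "\<forall>S\<in>blocks V E. card S \<ge> 3"
    and "n = card V"
    and "b = card (blocks V E)"
    and "k = zero_forcing_number V E"
  shows "int k = int n - int b \<and> n div 2 + 1 \<le> k \<and> k \<le> n - 1"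
proof -
  have ct: "clique_tree V E" by fact
  have g: "graph V E" using ct by (simp add: clique_tree_def)
  have fV: "finite V" using g by (simp add: graph_def)
  obtain B0 where B0: "zero_forcing_set V E B0" "card B0 + b = n" "2 * b + 1 \<le> n"
    using upper[OF ct] assms(2-4) by auto
  have ex: "\<exists>B. zero_forcing_set V E B \<and> card B = card B0" using B0 by blast
  have kle: "k \<le> card B0" unfolding assms(5) zero_forcing_number_def using ex by (rule Least_le)
  have ex2: "\<exists>j. \<exists>B. zero_forcing_set V E B \<and> card B = j" using ex by blast
  have "\<exists>B. zero_forcing_set V E B \<and> card B = k"
    unfolding assms(5) zero_forcing_number_def using ex2 by (rule LeastI_ex)
  then obtain B1 where B1: "zero_forcing_set V E B1" "card B1 = k" by blast
  have kge: "n \<le> k + b" using lower_bound[OF ct B1(1)] B1(2) assms(3,4) by simp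
  obtain v where "v \<in> V" using ct by (auto simp: clique_tree_def connected_on_def)
  then obtain K where "K \<in> blocks V E" using vertex_in_block[OF g] by blast
  then have b1: "1 \<le> b" using assms(4) finite_blocks[OF fV, of E] by (metis One_nat_def Suc_leI card_gt_0_iff empty_iff)
  have kk: "k + b = n" using kle kge B0(2) by simp
  show ?thesis using kk b1 B0(3) by presburger
qed


end
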